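(* Let $\rho_1,\dots,\rho_n$ be $d\times d$ positive definite density matrices, let $f(\rho):=\sum_{i=1}^n\operatorname{F}^{\mathrm U}(\rho_i,\rho)$ for density matrices $\rho$, and let $\sigma$ be the (unique, positive definite) maximizer of $f$ over all $d\times d$ density matrices. Then $$f(\sigma)^2=\sum_{i,j=1}^n\operatorname{F}_\sigma(\rho_i,\rho_j),\qquad\text{and}\qquad \operatorname{F}_\sigma(\rho_1,\dots,\rho_n)=\frac{f(\sigma)^2-n}{n^2-n}.$$
   Context: A density matrix is a positive semidefinite matrix of unit trace. The Uhlmann fidelity is $\operatorname{F}^{\mathrm U}(P,Q):=\operatorname{Tr}\sqrt{P^{1/2}QP^{1/2}}$. For positive definite $R$, the generalized fidelity is $\operatorname{F}_R(P,Q):=\operatorname{Tr}\big[\sqrt{R^{1/2}PR^{1/2}}\,R^{-1}\sqrt{R^{1/2}QR^{1/2}}\big]$. The generalized multivariate fidelity at $\sigma$ is $\operatorname{F}_\sigma(\rho_1,\dots,\rho_n):=\frac{1}{n(n-1)}\sum_{i\ne j}\operatorname{F}_\sigma(\rho_i,\rho_j)$, $n\ge2$. *)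

theory Defs
  imports "HOL-Analysis.Analysis"
begin

definition cadj :: "complex^'d^'d \<Rightarrow> complex^'d^'d" where
  "cadj A = (\<chi> i j. cnj (A $ j $ i))"

definition hermitian :: "complex^'d^'d \<Rightarrow> bool" where
  "hermitian A \<longleftrightarrow> cadj A = A"

definition cinner :: "complex^'d \<Rightarrow> complex^'d \<Rightarrow> complex" where
  "cinner x y = (\<Sum>i\<in>UNIV. cnj (x $ i) * y $ i)"

definition psd :: "complex^'d::finite^'d \<Rightarrow> bool" where
  "psd A \<longleftrightarrow> hermitian A \<and> (\<forall>x. 0 \<le> Re (cinner x (A *v x)))"

definition pd :: "complex^'d::finite^'d \<Rightarrow> bool" where
  "pd A \<longleftrightarrow> hermitian A \<and> (\<forall>x. x \<noteq> 0 \<longrightarrow> 0 < Re (cinner x (A *v x)))"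

definition density :: "complex^'d::finite^'d \<Rightarrow> bool" where
  "density A \<longleftrightarrow> psd A \<and> trace A = 1"

definition msqrt :: "complex^'d::finite^'d \<Rightarrow> complex^'d^'d" where
  "msqrt A = (THE B. psd B \<and> B ** B = A)"

text \<open>Uhlmann fidelity (the trace of a PSD matrix is real, so we take the real part).\<close>
definition uhlmann_fid :: "complex^'d::finite^'d \<Rightarrow> complex^'d^'d \<Rightarrow> real" where
  "uhlmann_fid P Q = Re (trace (msqrt (msqrt P ** Q ** msqrt P)))"

text \<open>Generalized fidelity F_R(P,Q), complex-valued in general.\<close>
definition gen_fid :: "complex^'d::finite^'d \<Rightarrow> complex^'d^'d \<Rightarrow> complex^'d^'d \<Rightarrow> complex" where
  "gen_fid R P Q =
     trace (msqrt (msqrt R ** P ** msqrt R) ** matrix_inv R ** msqrt (msqrt R ** Q ** msqrt R))"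

definition multi_fid :: "complex^'d::finite^'d \<Rightarrow> nat \<Rightarrow> (nat \<Rightarrow> complex^'d^'d) \<Rightarrow> complex" where
  "multi_fid \<sigma> n \<rho> =
     (\<Sum>i<n. \<Sum>j\<in>{..<n} - {i}. gen_fid \<sigma> (\<rho> i) (\<rho> j)) / (of_nat n * (of_nat n - 1))"

end

theory Submission
  imports Defs
begin

type_synonym 'd cmat = "complex^'d^'d"

lemma cadj_cadj[simp]: "cadj (cadj A) = A"
  by (simp add: cadj_def vec_eq_iff)

lemma cadj_nth[simp]: "cadj A $ i $ j = cnj (A $ j $ i)"
  by (simp add: cadj_def)

lemma cadj_mult: "cadj ((A::complex^'n^'n) ** B) = cadj B ** cadj A"
  by (simp add: cadj_def matrix_matrix_mult_def vec_eq_iff mult.commute)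

lemma cadj_add: "cadj (A + B) = cadj A + cadj B"
  by (simp add: cadj_def vec_eq_iff)

lemma cadj_diff: "cadj (A - B) = cadj A - cadj B"
  by (simp add: cadj_def vec_eq_iff)

lemma cadj_scaleR: "cadj (r *\<^sub>R A) = r *\<^sub>R cadj A"
  by (simp add: cadj_def vec_eq_iff)

lemma cadj_zero[simp]: "cadj 0 = 0"
  by (simp add: cadj_def vec_eq_iff)

lemma cadj_mat1[simp]: "cadj (mat 1) = mat 1"
  by (simp add: cadj_def vec_eq_iff mat_def)

lemma cadj_sum: "finite S \<Longrightarrow> cadj (sum F S) = sum (\<lambda>i. cadj (F i)) S"
  by (induct S rule: finite_induct) (auto simp: cadj_add)

lemma matrix_add_rdistrib2: "((A::complex^'n^'n) + B) ** C = A ** C + B ** C"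
  by (simp add: matrix_matrix_mult_def vec_eq_iff distrib_right sum.distrib)

lemma matrix_diff_rdistrib2: "((A::complex^'n^'n) - B) ** C = A ** C - B ** C"
  by (simp add: matrix_matrix_mult_def vec_eq_iff left_diff_distrib sum_subtractf)

lemma matrix_diff_ldistrib2: "(C::complex^'n^'n) ** (A - B) = C ** A - C ** B"
  by (simp add: matrix_matrix_mult_def vec_eq_iff right_diff_distrib sum_subtractf)

lemma matrix_scaleR_left: "(r *\<^sub>R (A::complex^'n^'n)) ** B = r *\<^sub>R (A ** B)"
  by (simp add: matrix_matrix_mult_def vec_eq_iff scaleR_sum_right)

lemma matrix_scaleR_right: "(A::complex^'n^'n) ** (r *\<^sub>R B) = r *\<^sub>R (A ** B)"
  by (simp add: matrix_matrix_mult_def vec_eq_iff scaleR_sum_right)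

lemma sum_matrix_mult_right: "finite S \<Longrightarrow> (sum (F::_\<Rightarrow>complex^'n^'n) S) ** (M::complex^'n^'n) = sum (\<lambda>i. F i ** M) S"
  by (induct S rule: finite_induct) (auto simp: matrix_add_rdistrib2)

lemma sum_matrix_mult_left: "finite S \<Longrightarrow> (M::complex^'n^'n) ** (sum (F::_\<Rightarrow>complex^'n^'n) S) = sum (\<lambda>i. M ** F i) S"
  by (induct S rule: finite_induct) (auto simp: matrix_add_ldistrib)

lemma trace_sum: "finite S \<Longrightarrow> trace (sum F S) = sum (\<lambda>i. trace (F i)) S"
  by (simp add: trace_def sum_component sum.swap[of _ S])

lemma trace_cadj: "trace (cadj A) = cnj (trace A)"
  by (simp add: trace_def)

lemma trace_scaleR: "trace (r *\<^sub>R (A::complex^'n^'n)) = of_real r * trace A"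
  by (simp add: trace_def sum_distrib_left) (simp add: scaleR_conv_of_real)

lemma cinner_conj: "cnj (cinner x y) = cinner y x"
  by (simp add: cinner_def mult.commute)

lemma cinner_add_right: "cinner x (y + z) = cinner x y + cinner x z"
  by (simp add: cinner_def distrib_left sum.distrib)
lemma cinner_add_left: "cinner (x + y) z = cinner x z + cinner y z"
  by (simp add: cinner_def distrib_right sum.distrib)
lemma cinner_diff_right: "cinner x (y - z) = cinner x y - cinner x z"
  by (simp add: cinner_def right_diff_distrib sum_subtractf)
lemma cinner_diff_left: "cinner (x - y) z = cinner x z - cinner y z"
  by (simp add: cinner_def left_diff_distrib sum_subtractf)
lemma cinner_scale_right: "cinner x (c *s y) = c * cinner x y"
  by (simp add: cinner_def sum_distrib_left algebra_simps)
lemma cinner_scale_left: "cinner (c *s x) y = cnj c * cinner x y"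
  by (simp add: cinner_def sum_distrib_left algebra_simps)
lemma cinner_scaleR_right: "cinner x (r *\<^sub>R y) = of_real r * cinner x y"
  by (simp add: cinner_def sum_distrib_left) (simp add: scaleR_conv_of_real algebra_simps)
lemma cinner_scaleR_left: "cinner (r *\<^sub>R x) y = of_real r * cinner x y"
  by (simp add: cinner_def sum_distrib_left) (simp add: scaleR_conv_of_real algebra_simps)
lemma cinner_zero_left[simp]: "cinner 0 y = 0"
  by (simp add: cinner_def)
lemma cinner_zero_right[simp]: "cinner x 0 = 0"
  by (simp add: cinner_def)
lemma cinner_sum_right: "finite S \<Longrightarrow> cinner x (sum F S) = (\<Sum>i\<in>S. cinner x (F i))"
  by (induct S rule: finite_induct) (auto simp: cinner_add_right)

lemma Re_cinner: "Re (cinner x y) = inner x y"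
  by (simp add: cinner_def inner_vec_def inner_complex_def)

lemma cinner_self_real: "cinner x x = of_real (Re (cinner x x))"
  by (simp add: cinner_def complex_eq_iff)

lemma cinner_self: "cinner x x = of_real ((norm x)\<^sup>2)"
  by (metis Re_cinner cinner_self_real power2_norm_eq_inner)

lemma cinner_self_eq_0[simp]: "cinner x x = 0 \<longleftrightarrow> x = 0"
  by (simp add: cinner_self)

lemma Re_cinner_self: "Re (cinner x x) = (norm x)\<^sup>2"
  by (simp add: cinner_self)

lemma cinner_adj: "cinner x ((A::complex^'n^'n) *v y) = cinner (cadj A *v x) y"
  apply (simp add: cinner_def matrix_vector_mult_def cadj_def sum_distrib_left sum_distrib_right)
  apply (subst sum.swap)
  apply (simp add: mult_ac)
  done

lemma hermitian_cinner: "hermitian A \<Longrightarrow> cinner x (A *v y) = cinner (A *v x) y"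
  by (metis cinner_adj hermitian_def)

lemma hermitian_quad_real: "hermitian A \<Longrightarrow> cinner x (A *v x) = of_real (Re (cinner x (A *v x)))"
proof -
  assume h: "hermitian A"
  have "cnj (cinner x (A *v x)) = cinner x (A *v x)"
    using h by (simp add: cinner_conj hermitian_cinner)
  then show ?thesis by (simp add: complex_eq_iff)
qed

definition cols :: "('d \<Rightarrow> complex^'d) \<Rightarrow> complex^'d^'d" where
  "cols v = (\<chi> i j. v j $ i)"

definition unitary :: "complex^'d^'d \<Rightarrow> bool" where
  "unitary U \<longleftrightarrow> cadj U ** U = mat 1"

definition orthonormal :: "'d set \<Rightarrow> ('d \<Rightarrow> complex^'d) \<Rightarrow> bool" where
  "orthonormal T v \<longleftrightarrow> (\<forall>a\<in>T. \<forall>b\<in>T. cinner (v a) (v b) = (if a = b then 1 else 0))"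

lemma cadj_cols_mult_nth: "(cadj (cols v) ** cols v) $ a $ b = cinner (v a) (v b)"
  by (simp add: cols_def cadj_def matrix_matrix_mult_def cinner_def)

lemma unitary_cols: "unitary (cols v) \<longleftrightarrow> orthonormal UNIV v"
  by (simp add: unitary_def orthonormal_def vec_eq_iff cadj_cols_mult_nth mat_def)

lemma unitary_right: "unitary (U::complex^'d::finite^'d) \<Longrightarrow> U ** cadj U = mat 1"
  by (simp add: unitary_def matrix_left_right_inverse)

lemma unitary_cadj: "unitary (U::complex^'d::finite^'d) \<Longrightarrow> unitary (cadj U)"
  by (simp add: unitary_def unitary_right)

lemma unitary_mult: "unitary (U::complex^'d::finite^'d) \<Longrightarrow> unitary V \<Longrightarrow> unitary (U ** V)"
  unfolding unitary_def
  by (simp add: cadj_mult matrix_mul_assoc) (metis matrix_mul_assoc matrix_mul_lid)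

lemma mult_cols: "(M::complex^'d::finite^'d) ** cols v = cols (\<lambda>j. M *v v j)"
  by (simp add: cols_def matrix_matrix_mult_def matrix_vector_mult_def vec_eq_iff)

lemma cols_axis: "cols v *v axis k 1 = v k"
  by (simp add: cols_def matrix_vector_mult_def vec_eq_iff axis_def if_distrib cong: if_cong)

lemma cadj_cols_vec: "orthonormal UNIV v \<Longrightarrow> cadj (cols v) *v v k = axis k 1"
  by (simp add: orthonormal_def cols_def cadj_def matrix_vector_mult_def vec_eq_iff axis_def
      cinner_def[symmetric])

lemma unitary_cinner: "unitary (U::complex^'d::finite^'d) \<Longrightarrow> cinner (U *v x) (U *v y) = cinner x y"
  by (simp add: cinner_adj matrix_vector_mul_assoc unitary_def)

lemma unitary_norm: "unitary (U::complex^'d::finite^'d) \<Longrightarrow> norm (U *v x) = norm x"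
  using unitary_cinner[of U x x] by (simp add: cinner_self)
    (metis of_real_power of_real_eq_iff power2_eq_imp_eq norm_ge_zero)

lemma matrix_eq_on_basis:
  fixes M N :: "complex^'d::finite^'d"
  assumes "orthonormal UNIV v" "\<And>k. M *v v k = N *v v k"
  shows "M = N"
proof -
  have "M ** cols v = N ** cols v" by (simp add: mult_cols assms(2))
  then have "M ** cols v ** cadj (cols v) = N ** cols v ** cadj (cols v)" by simp
  then show ?thesis
    using unitary_right[of "cols v"] assms(1) by (simp add: unitary_cols flip: matrix_mul_assoc)
qed

lemma exists_orth:
  fixes v :: "'d::finite \<Rightarrow> complex^'d"
  assumes T: "T \<noteq> UNIV" and on: "orthonormal T v"
  shows "\<exists>x. cinner x x = 1 \<and> (\<forall>a\<in>T. cinner (v a) x = 0)"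
proof -
  define S where "S = v ` T \<union> (\<lambda>a. \<i> *s v a) ` T"
  have fin: "finite S" by (simp add: S_def)
  have "card S \<le> card (v ` T) + card ((\<lambda>a. \<i> *s v a) ` T)"
    unfolding S_def by (rule card_Un_le)
  also have "\<dots> \<le> 2 * card T"
    using card_image_le[of T v] card_image_le[of T "\<lambda>a. \<i> *s v a"] by simp
  finally have c1: "card S \<le> 2 * card T" .
  have "card T < CARD('d)"
    using T by (simp add: psubset_card_mono[of UNIV T] psubsetI)
  then have dS: "dim S < DIM(complex^'d)"
    using dim_le_card[of S S] fin c1 span_superset[of S] by simp
  obtain x where x: "x \<noteq> 0" "\<And>y. y \<in> span S \<Longrightarrow> orthogonal x y"
    using orthogonal_to_subspace_exists[OF dS] by blast
  have z: "cinner (v a) x = 0" if a: "a \<in> T" for a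
  proof -
    have "v a \<in> span S" "\<i> *s v a \<in> span S" using a by (auto simp: S_def intro: span_base)
    then have o1: "inner x (v a) = 0" and o2: "inner x (\<i> *s v a) = 0"
      using x(2) by (auto simp: orthogonal_def)
    have "Re (cinner x (v a)) = 0" using o1 by (simp add: Re_cinner)
    moreover have "Re (cinner x (\<i> *s v a)) = 0" using o2 by (simp add: Re_cinner)
    ultimately have "cinner x (v a) = 0"
      by (simp add: cinner_scale_right complex_eq_iff)
    then show ?thesis by (metis cinner_conj complex_cnj_zero)
  qed
  define y where "y = (1 / norm x) *\<^sub>R x"
  have "cinner y y = 1"
    using x(1) by (simp add: y_def cinner_scaleR_left cinner_scaleR_right cinner_self power2_eq_square)
  moreover have "\<forall>a\<in>T. cinner (v a) y = 0"
    using z by (simp add: y_def cinner_scaleR_right)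
  ultimately show ?thesis by blast
qed

lemma orth_extend:
  fixes v :: "'d::finite \<Rightarrow> complex^'d"
  assumes step: "\<And>T v. T \<noteq> UNIV \<Longrightarrow> orthonormal T v \<Longrightarrow> (\<forall>a\<in>T. Q (v a)) \<Longrightarrow>
      \<exists>y. cinner y y = 1 \<and> (\<forall>a\<in>T. cinner (v a) y = 0) \<and> Q y"
  shows "orthonormal T v \<Longrightarrow> (\<forall>a\<in>T. Q (v a)) \<Longrightarrow>
      \<exists>w. orthonormal UNIV w \<and> (\<forall>a. Q (w a)) \<and> (\<forall>a\<in>T. w a = v a)"
proof (induction "card (UNIV - T)" arbitrary: T v rule: less_induct)
  case less
  show ?case
  proof (cases "T = UNIV")
    case True
    then show ?thesis using less.prems by auto
  next
    case False
    then obtain a where a: "a \<notin> T" by auto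
    obtain y where y: "cinner y y = 1" "\<forall>b\<in>T. cinner (v b) y = 0" "Q y"
      using step[OF False less.prems] by blast
    define v' where "v' = v(a := y)"
    have on': "orthonormal (insert a T) v'"
      unfolding orthonormal_def
    proof (intro ballI)
      fix b c assume b: "b \<in> insert a T" and c: "c \<in> insert a T"
      show "cinner (v' b) (v' c) = (if b = c then 1 else 0)"
      proof (cases "b = a"; cases "c = a")
        assume "b = a" "c = a" then show ?thesis using y by (simp add: v'_def)
      next
        assume "b = a" "c \<noteq> a" then show ?thesis using y c a
          by (simp add: v'_def) (metis cinner_conj complex_cnj_zero)
      next
        assume "b \<noteq> a" "c = a" then show ?thesis using y b a by (simp add: v'_def)
      next
        assume "b \<noteq> a" "c \<noteq> a" then show ?thesis using b c less.prems(1) a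
          by (auto simp: v'_def orthonormal_def)
      qed
    qed
    have Q': "\<forall>b\<in>insert a T. Q (v' b)" using less.prems(2) y(3) a by (auto simp: v'_def)
    have "card (UNIV - insert a T) < card (UNIV - T)"
      using a by (intro psubset_card_mono) auto
    then obtain w where w: "orthonormal UNIV w" "\<forall>b. Q (w b)" "\<forall>b\<in>insert a T. w b = v' b"
      using less.hyps on' Q' by blast
    then show ?thesis using a by (auto simp: v'_def)
  qed
qed

lemma mv_scale: "(M::complex^'d::finite^'d) *v (c *s x) = c *s (M *v x)"
  by (simp add: matrix_vector_mult_def vec_eq_iff sum_distrib_left mult_ac)

lemma mv_scaleR: "(M::complex^'d::finite^'d) *v (r *\<^sub>R x) = r *\<^sub>R (M *v x)"
  by (simp add: matrix_vector_mult_def vec_eq_iff scaleR_sum_right)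

lemma scaleR_as_scale: "r *\<^sub>R (x::complex^'d) = of_real r *s x"
  by (simp add: vec_eq_iff scaleR_conv_of_real[where 'a=complex])

lemma quad_expand:
  fixes H :: "complex^'d::finite^'d"
  assumes h: "hermitian H"
  shows "cinner (a + t *\<^sub>R b) (H *v (a + t *\<^sub>R b)) =
     cinner a (H *v a) + of_real t * (cinner a (H *v b) + cinner b (H *v a)) + of_real (t^2) * cinner b (H *v b)"
  by (simp add: matrix_vector_right_distrib mv_scaleR cinner_add_left cinner_add_right
      cinner_scaleR_left cinner_scaleR_right algebra_simps power2_eq_square)

lemma continuous_quad: "continuous_on S (\<lambda>x. Re (cinner x ((H::complex^'d::finite^'d) *v x)))"
  unfolding cinner_def matrix_vector_mult_def
  by (simp add: continuous_intros)

lemma continuous_cinner_right: "continuous_on S (\<lambda>x. cinner (y::complex^'d::finite) x)"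
  unfolding cinner_def by (intro continuous_intros)

lemma cinner_one_norm: "cinner y y = 1 \<Longrightarrow> norm y = 1"
proof -
  assume "cinner y y = 1"
  then have "(norm y)\<^sup>2 = 1" by (simp add: cinner_self) (metis of_real_eq_1_iff of_real_power)
  then show ?thesis using norm_ge_zero[of y] by (simp add: power2_eq_1_iff)
qed

lemma eigen_step:
  fixes H :: "complex^'d::finite^'d" and v :: "'d \<Rightarrow> complex^'d"
  assumes h: "hermitian H" and T: "T \<noteq> UNIV" and on: "orthonormal T v"
    and ev: "\<forall>a\<in>T. \<exists>l::real. H *v v a = of_real l *s v a"
  shows "\<exists>y. cinner y y = 1 \<and> (\<forall>a\<in>T. cinner (v a) y = 0) \<and> (\<exists>l::real. H *v y = of_real l *s y)"
proof -
  define S where "S = {x. \<forall>a\<in>T. cinner (v a) x = 0}"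
  define K where "K = S \<inter> sphere 0 1"
  have S_add: "x + y \<in> S" if "x \<in> S" "y \<in> S" for x y
    using that by (simp add: S_def cinner_add_right)
  have S_scaleR: "r *\<^sub>R x \<in> S" if "x \<in> S" for x r
    using that by (simp add: S_def cinner_scaleR_right)
  have S_scale: "c *s x \<in> S" if "x \<in> S" for x c
    using that by (simp add: S_def cinner_scale_right)
  have S_H: "H *v x \<in> S" if "x \<in> S" for x
  proof -
    have "cinner (v a) (H *v x) = 0" if a: "a \<in> T" for a
    proof -
      obtain l :: real where l: "H *v v a = of_real l *s v a" using ev a by blast
      have "cinner (v a) (H *v x) = cinner (H *v v a) x" using h by (simp add: hermitian_cinner)
      also have "\<dots> = 0" using l \<open>x \<in> S\<close> a by (simp add: cinner_scale_left S_def)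
      finally show ?thesis .
    qed
    then show ?thesis by (simp add: S_def)
  qed
  have closedS: "closed S"
  proof -
    have "S = (\<Inter>a\<in>T. {x. cinner (v a) x = 0})" by (auto simp: S_def)
    moreover have "closed {x. cinner (v a) x = 0}" for a
      by (rule closed_Collect_eq) (auto intro: continuous_cinner_right continuous_on_const)
    ultimately show ?thesis by auto
  qed
  have compK: "compact K" unfolding K_def using closedS compact_sphere by (rule closed_Int_compact)
  obtain y0 where y0: "cinner y0 y0 = 1" "\<forall>a\<in>T. cinner (v a) y0 = 0"
    using exists_orth[OF T on] by blast
  have "norm y0 = 1" using y0(1) by (rule cinner_one_norm)
  then have "y0 \<in> K" using y0 by (simp add: K_def S_def)
  then have "K \<noteq> {}" by blast
  then obtain v0 where v0K: "v0 \<in> K" and vmax: "\<forall>y\<in>K. Re (cinner y (H *v y)) \<le> Re (cinner v0 (H *v v0))"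
    using continuous_attains_sup[OF compK _ continuous_quad] by blast
  define lam where "lam = Re (cinner v0 (H *v v0))"
  have v0S: "v0 \<in> S" and nv0: "norm v0 = 1" using v0K by (auto simp: K_def)
  have v0v0: "cinner v0 v0 = 1" using nv0 by (simp add: cinner_self)
  have qlam: "cinner v0 (H *v v0) = of_real lam" using hermitian_quad_real[OF h] by (simp add: lam_def)
  have bound: "Re (cinner x (H *v x)) \<le> lam * (norm x)\<^sup>2" if xS: "x \<in> S" for x
  proof (cases "x = 0")
    case True then show ?thesis by simp
  next
    case False
    define x' where "x' = (1 / norm x) *\<^sub>R x"
    have "x' \<in> K" using False xS S_scaleR by (simp add: K_def x'_def)
    then have "Re (cinner x' (H *v x')) \<le> lam" using vmax lam_def by blast
    moreover have "Re (cinner x' (H *v x')) = Re (cinner x (H *v x)) / (norm x)\<^sup>2"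
      by (simp add: x'_def mv_scaleR cinner_scaleR_left cinner_scaleR_right power2_eq_square)
    ultimately show ?thesis using False by (simp add: divide_le_eq mult.commute)
  qed
  define r where "r = H *v v0 - of_real lam *s v0"
  have rS: "r \<in> S" using S_H[OF v0S] v0S by (simp add: S_def r_def cinner_diff_right cinner_scale_right)
  have v0r: "cinner v0 r = 0" by (simp add: r_def cinner_diff_right cinner_scale_right qlam v0v0)
  have rv0: "cinner r v0 = 0" using v0r by (metis cinner_conj complex_cnj_zero)
  have Hv0: "H *v v0 = r + of_real lam *s v0" by (simp add: r_def)
  have c1: "cinner v0 (H *v r) = cinner r r"
  proof -
    have "cinner v0 (H *v r) = cinner (H *v v0) r" using h by (simp add: hermitian_cinner)
    also have "\<dots> = cinner r r" by (simp add: Hv0 cinner_add_left cinner_scale_left v0r)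
    finally show ?thesis .
  qed
  have c2: "cinner r (H *v v0) = cinner r r"
    by (simp add: Hv0 cinner_add_right cinner_scale_right rv0)
  define R where "R = (norm r)\<^sup>2"
  define q where "q = Re (cinner r (H *v r))"
  have key: "2 * t * R \<le> t^2 * (lam * R - q)" if t: "t > 0" for t :: real
  proof -
    have xS: "v0 + t *\<^sub>R r \<in> S" using S_add[OF v0S S_scaleR[OF rS]] by simp
    have "Re (cinner (v0 + t *\<^sub>R r) (H *v (v0 + t *\<^sub>R r))) = lam + 2 * t * R + t^2 * q"
      using quad_expand[OF h, of v0 t r] by (simp add: qlam c1 c2 cinner_self R_def q_def)
    moreover have "(norm (v0 + t *\<^sub>R r))\<^sup>2 = 1 + t^2 * R"
    proof -
      have "cinner (v0 + t *\<^sub>R r) (v0 + t *\<^sub>R r) = 1 + of_real (t^2 * R)"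
        by (simp add: cinner_add_left cinner_add_right cinner_scaleR_left cinner_scaleR_right
            v0v0 v0r rv0 cinner_self[of r] R_def power2_eq_square)
      then have "(of_real ((norm (v0 + t *\<^sub>R r))\<^sup>2) :: complex) = of_real (1 + t^2 * R)"
        by (simp add: cinner_self)
      then show ?thesis using of_real_eq_iff by blast
    qed
    ultimately have "lam + 2 * t * R + t^2 * q \<le> lam * (1 + t^2 * R)" using bound[OF xS] by simp
    then show ?thesis by (simp add: algebra_simps)
  qed
  have "R = 0"
  proof (rule ccontr)
    assume "R \<noteq> 0"
    then have Rp: "R > 0" by (simp add: R_def)
    define C where "C = lam * R - q"
    define t where "t = R / (\<bar>C\<bar> + 1)"
    have tp: "t > 0" using Rp by (simp add: t_def add_pos_nonneg)
    have "2 * t * R \<le> t^2 * C" using key[OF tp] by (simp add: C_def)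
    then have "2 * R \<le> t * C" using tp by (simp add: power2_eq_square mult.assoc)
    also have "\<dots> \<le> t * \<bar>C\<bar>" using tp by (simp add: mult_left_mono)
    also have "\<dots> < t * (\<bar>C\<bar> + 1)" using tp by simp
    also have "\<dots> = R" by (simp add: t_def)
    finally show False using Rp by simp
  qed
  then have "r = 0" by (simp add: R_def)
  then have "H *v v0 = of_real lam *s v0" by (simp add: r_def)
  then show ?thesis using v0v0 v0S by (auto simp: S_def)
qed

theorem spectral:
  fixes H :: "complex^'d::finite^'d"
  assumes h: "hermitian H"
  shows "\<exists>v d. orthonormal UNIV v \<and> (\<forall>k. H *v v k = of_real (d k) *s v k)"
proof -
  have "\<exists>w. orthonormal UNIV w \<and> (\<forall>a. \<exists>l::real. H *v w a = of_real l *s w a) \<and> (\<forall>a\<in>{}. w a = undefined a)"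
    by (rule orth_extend[where Q = "\<lambda>y. \<exists>l::real. H *v y = of_real l *s y"])
       (auto simp: orthonormal_def intro: eigen_step[OF h])
  then obtain w where w: "orthonormal UNIV w" "\<forall>a. \<exists>l::real. H *v w a = of_real l *s w a" by blast
  then show ?thesis by metis
qed

definition cdiag :: "('d \<Rightarrow> real) \<Rightarrow> complex^'d^'d" where
  "cdiag d = (\<chi> i j. if i = j then of_real (d i) else 0)"

definition sdecomp :: "('d \<Rightarrow> complex^'d) \<Rightarrow> ('d \<Rightarrow> real) \<Rightarrow> complex^'d^'d" where
  "sdecomp v d = cols v ** cdiag d ** cadj (cols v)"

lemma sum_if_mult: "(\<Sum>j\<in>(UNIV::'d::finite set). (if i = j then (a::complex) else 0) * f j) = a * f i"
proof -
  have e: "(\<lambda>j. (if i = j then a else 0) * f j) = (\<lambda>j. if i = j then a * f j else 0)" by auto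
  show ?thesis unfolding e by (simp add: sum.delta)
qed

lemma cdiag_mv: "cdiag d *v x = (\<chi> i. of_real (d i) * x $ i)"
  unfolding cdiag_def matrix_vector_mult_def vec_eq_iff vec_lambda_beta
  by (simp only: sum_if_mult) simp

lemma cdiag_axis: "cdiag d *v axis k (1::complex) = of_real (d k) *s axis k 1"
  by (simp add: cdiag_mv axis_def vec_eq_iff)

lemma cadj_cdiag[simp]: "cadj (cdiag d) = cdiag d"
  by (simp add: cdiag_def cadj_def vec_eq_iff)

lemma cols_scale: "cols v *v (c *s x) = c *s (cols v *v x)"
  by (rule mv_scale)

lemma sdecomp_vec:
  assumes "orthonormal UNIV v"
  shows "sdecomp (v::'d::finite \<Rightarrow> complex^'d) d *v v k = of_real (d k) *s v k"
  using assms
  by (simp add: sdecomp_def flip: matrix_vector_mul_assoc)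
     (simp add: cadj_cols_vec cdiag_axis mv_scale cols_axis)

lemma hermitian_sdecomp: "hermitian (sdecomp (v::'d::finite \<Rightarrow> complex^'d) d)"
  by (simp add: hermitian_def sdecomp_def cadj_mult matrix_mul_assoc)

lemma quad_cdiag: "Re (cinner y (cdiag d *v y)) = (\<Sum>k\<in>UNIV. d k * (cmod (y $ k))\<^sup>2)"
proof -
  have "cinner y (cdiag d *v y) = (\<Sum>k\<in>UNIV. cnj (y $ k) * (of_real (d k) * y $ k))"
    by (simp add: cinner_def cdiag_mv)
  also have "\<dots> = (\<Sum>k\<in>UNIV. of_real (d k * (cmod (y $ k))\<^sup>2))"
    by (intro sum.cong refl) (simp add: complex_norm_square[symmetric] mult_ac flip: of_real_power)
  finally show ?thesis by (simp only: Re_sum Re_complex_of_real)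
qed

lemma quad_sdecomp:
  "Re (cinner x (sdecomp (v::'d::finite \<Rightarrow> complex^'d) d *v x)) =
     Re (cinner (cadj (cols v) *v x) (cdiag d *v (cadj (cols v) *v x)))"
  by (simp add: sdecomp_def cinner_adj matrix_vector_mul_assoc flip: matrix_vector_mul_assoc)

lemma psd_sdecomp:
  assumes "\<And>k. d k \<ge> 0"
  shows "psd (sdecomp (v::'d::finite \<Rightarrow> complex^'d) d)"
  unfolding psd_def
proof (intro conjI allI)
  show "hermitian (sdecomp v d)" by (rule hermitian_sdecomp)
  fix x
  show "0 \<le> Re (cinner x (sdecomp v d *v x))"
    unfolding quad_sdecomp quad_cdiag using assms by (intro sum_nonneg) simp
qed

lemma sdecomp_eq:
  fixes H :: "complex^'d::finite^'d"
  assumes "orthonormal UNIV v" "\<And>k. H *v v k = of_real (d k) *s v k"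
  shows "H = sdecomp v d"
  using assms by (intro matrix_eq_on_basis[OF assms(1)]) (simp add: sdecomp_vec)

lemma psd_hermitian: "psd A \<Longrightarrow> hermitian A"
  by (simp add: psd_def)

lemma psd_eigen_nonneg:
  fixes H :: "complex^'d::finite^'d"
  assumes "psd H" "orthonormal UNIV v" "H *v v k = of_real (d k) *s v k"
  shows "d k \<ge> 0"
proof -
  have "cinner (v k) (v k) = 1" using assms(2) by (simp add: orthonormal_def)
  then have "Re (cinner (v k) (H *v v k)) = d k" using assms(3) by (simp add: cinner_scale_right)
  then show ?thesis using assms(1) by (metis psd_def)
qed

lemma psd_sqrt_exists:
  fixes A :: "complex^'d::finite^'d"
  assumes "psd A"
  shows "\<exists>B. psd B \<and> B ** B = A"
proof -
  obtain v d where v: "orthonormal UNIV v" "\<And>k. A *v v k = of_real (d k) *s v k"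
    using spectral[OF psd_hermitian[OF assms]] by blast
  have d0: "d k \<ge> 0" for k using psd_eigen_nonneg[OF assms v(1) v(2)] .
  define B where "B = sdecomp v (\<lambda>k. sqrt (d k))"
  have "psd B" unfolding B_def by (rule psd_sdecomp) (simp add: d0)
  moreover have "B ** B = A"
  proof (rule matrix_eq_on_basis[OF v(1)])
    fix k
    have "(B ** B) *v v k = B *v (B *v v k)" by (simp add: matrix_vector_mul_assoc)
    also have "\<dots> = of_real (d k) *s v k"
      using d0[of k] by (simp add: B_def sdecomp_vec[OF v(1)] mv_scale vector_smult_assoc
          flip: of_real_mult)
    finally show "(B ** B) *v v k = A *v v k" by (simp add: v(2))
  qed
  ultimately show ?thesis by blast
qed

lemma psd_zero_form:
  fixes A :: "complex^'d::finite^'d"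
  assumes "psd A" "Re (cinner x (A *v x)) = 0"
  shows "A *v x = 0"
proof -
  obtain B where B: "psd B" "B ** B = A" using psd_sqrt_exists[OF assms(1)] by blast
  have "A *v x = B *v (B *v x)" using B(2) by (simp add: matrix_vector_mul_assoc)
  then have "cinner x (A *v x) = cinner (B *v x) (B *v x)"
    using hermitian_cinner[OF psd_hermitian[OF B(1)]] by simp
  then have "Re (cinner (B *v x) (B *v x)) = 0" using assms(2) by simp
  then have "B *v x = 0" by (simp add: Re_cinner_self)
  then show ?thesis using B(2) by (metis matrix_vector_mul_assoc matrix_vector_mult_0_right)
qed

lemma psd_quad_nonneg: "psd A \<Longrightarrow> 0 \<le> Re (cinner x (A *v x))"
  by (simp add: psd_def)

lemma psd_sqrt_unique:
  fixes B C :: "complex^'d::finite^'d"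
  assumes B: "psd B" and C: "psd C" and eq: "B ** B = C ** C"
  shows "B = C"
proof -
  define K where "K = B - C"
  have hK: "hermitian K"
    using B C by (simp add: K_def psd_def hermitian_def cadj_diff)
  obtain v mu where v: "orthonormal UNIV v" "\<And>k. K *v v k = of_real (mu k) *s v k"
    using spectral[OF hK] by blast
  have Kz: "K *v v k = 0 *v v k" for k
  proof -
    define w where "w = v k"
    define b where "b = B *v w"
    define c where "c = C *v w"
    have ww: "cinner w w = 1" using v(1) by (simp add: orthonormal_def w_def)
    have bc: "b - c = of_real (mu k) *s w"
      using v(2)[of k] by (simp add: K_def b_def c_def w_def matrix_vector_mult_diff_rdistrib)
    have bb: "cinner w (B *v b) = cinner b b"
      using hermitian_cinner[OF psd_hermitian[OF B]] by (simp add: b_def)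
    have cc: "cinner w (C *v c) = cinner c c"
      using hermitian_cinner[OF psd_hermitian[OF C]] by (simp add: c_def)
    have "B *v b = C *v c" using eq by (simp add: b_def c_def matrix_vector_mul_assoc)
    then have bbcc: "cinner b b = cinner c c" using bb cc by simp
    have "Re (cinner (b - c) (b + c)) = Re (cinner b b) - Re (cinner c c) + Re (cinner b c) - Re (cinner c b)"
      by (simp add: cinner_diff_left cinner_add_right)
    also have "\<dots> = 0"
    proof -
      have e: "Re (cinner c b) = Re (cinner b c)" using cinner_conj[of b c] by (metis cnj.sel(1))
      show ?thesis using bbcc e by simp
    qed
    finally have "Re (cinner (of_real (mu k) *s w) (b + c)) = 0" by (simp add: bc)
    then have m: "mu k * (Re (cinner w b) + Re (cinner w c)) = 0"
      by (simp add: cinner_scale_left cinner_add_right ring_distribs)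
    show ?thesis
    proof (cases "mu k = 0")
      case True then show ?thesis using v(2)[of k] by simp
    next
      case False
      then have "Re (cinner w b) + Re (cinner w c) = 0" using m mult_eq_0_iff by blast
      moreover have "Re (cinner w b) \<ge> 0" "Re (cinner w c) \<ge> 0"
        using psd_quad_nonneg[OF B] psd_quad_nonneg[OF C] by (auto simp: b_def c_def)
      ultimately have "Re (cinner w b) = 0" "Re (cinner w c) = 0" by linarith+
      then have "b = 0" "c = 0" using psd_zero_form[OF B] psd_zero_form[OF C] by (auto simp: b_def c_def)
      then have "of_real (mu k) *s w = 0" using bc by simp
      then have "of_real (mu k) * cinner w w = 0"
        by (metis cinner_scale_right cinner_zero_right)
      then show ?thesis using ww False by simp
    qed
  qed
  have "K = 0" by (rule matrix_eq_on_basis[OF v(1)]) (simp add: Kz)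
  then show ?thesis by (simp add: K_def)
qed

lemma msqrt:
  fixes A :: "complex^'d::finite^'d"
  assumes "psd A"
  shows "psd (msqrt A)" "msqrt A ** msqrt A = A"
proof -
  have ex: "\<exists>!B. psd B \<and> B ** B = A"
    using psd_sqrt_exists[OF assms] psd_sqrt_unique by blast
  show "psd (msqrt A)" "msqrt A ** msqrt A = A"
    using theI'[OF ex] by (simp_all add: msqrt_def)
qed

lemma msqrt_unique:
  fixes A :: "complex^'d::finite^'d"
  assumes "psd B" "B ** B = A"
  shows "msqrt A = B"
proof -
  have "psd A"
    unfolding psd_def
  proof (intro conjI allI)
    show "hermitian A" using assms psd_hermitian[OF assms(1)]
      by (auto simp: hermitian_def cadj_mult)
    fix x
    have "A *v x = B *v (B *v x)" using assms(2) by (simp add: matrix_vector_mul_assoc)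
    then have "cinner x (A *v x) = cinner (B *v x) (B *v x)"
      using hermitian_cinner[OF psd_hermitian[OF assms(1)]] by simp
    then show "0 \<le> Re (cinner x (A *v x))" by (simp add: Re_cinner_self)
  qed
  then show ?thesis using msqrt[of A] assms psd_sqrt_unique by metis
qed

definition absv :: "complex^'d::finite^'d \<Rightarrow> complex^'d^'d" where
  "absv Z = msqrt (cadj Z ** Z)"

definition tn :: "complex^'d::finite^'d \<Rightarrow> real" where
  "tn Z = Re (trace (absv Z))"

lemma psd_adjmul: "psd (cadj (Z::complex^'d::finite^'d) ** Z)"
  unfolding psd_def
proof (intro conjI allI)
  show "hermitian (cadj Z ** Z)" by (simp add: hermitian_def cadj_mult)
  fix x
  have "cinner x ((cadj Z ** Z) *v x) = cinner (Z *v x) (Z *v x)"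
    by (simp add: cinner_adj flip: matrix_vector_mul_assoc)
  then show "0 \<le> Re (cinner x ((cadj Z ** Z) *v x))" by (simp add: Re_cinner_self)
qed

lemma psd_muladj: "psd ((Z::complex^'d::finite^'d) ** cadj Z)"
  using psd_adjmul[of "cadj Z"] by simp

lemma absv: "psd (absv Z)" "absv Z ** absv Z = cadj Z ** Z"
  using msqrt[OF psd_adjmul[of Z]] by (simp_all add: absv_def)

lemma cadj_cols_cols: "(cadj (cols v) ** cols w) $ a $ b = cinner (v a) (w b)"
  by (simp add: cols_def cadj_def matrix_matrix_mult_def cinner_def)

lemma trace_onb:
  fixes M :: "complex^'d::finite^'d"
  assumes "orthonormal UNIV u"
  shows "trace M = (\<Sum>k\<in>UNIV. cinner (u k) (M *v u k))"
proof -
  have U: "cols u ** cadj (cols u) = mat 1" using assms unitary_right unitary_cols by blast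
  have "trace M = trace (M ** cols u ** cadj (cols u))" using U by (simp flip: matrix_mul_assoc)
  also have "\<dots> = trace (cadj (cols u) ** (M ** cols u))" by (rule trace_mul_sym)
  also have "\<dots> = (\<Sum>k\<in>UNIV. cinner (u k) (M *v u k))"
    by (simp only: mult_cols[of M u]) (simp add: trace_def cadj_cols_cols)
  finally show ?thesis .
qed

lemma norm_Z_eigen:
  fixes Z :: "complex^'d::finite^'d"
  assumes "absv Z *v u = of_real d *s u" "d \<ge> 0" "cinner u u = 1"
  shows "norm (Z *v u) = d"
proof -
  have "cinner (Z *v u) (Z *v u) = cinner u ((cadj Z ** Z) *v u)"
    by (simp add: cinner_adj flip: matrix_vector_mul_assoc)
  also have "\<dots> = cinner u (absv Z *v (absv Z *v u))"
    by (simp add: matrix_vector_mul_assoc absv(2))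
  also have "\<dots> = of_real (d^2)" using assms by (simp add: mv_scale cinner_scale_right power2_eq_square)
  finally have "(norm (Z *v u))\<^sup>2 = d^2" by (simp add: cinner_self) (metis of_real_eq_iff of_real_power)
  then show ?thesis using assms(2) by (simp add: power2_eq_iff_nonneg)
qed

lemma absv_spectral:
  fixes Z :: "complex^'d::finite^'d"
  obtains u d where "orthonormal UNIV u" "\<And>k. absv Z *v u k = of_real (d k) *s u k" "\<And>k. d k \<ge> 0"
proof -
  obtain u d where u: "orthonormal UNIV u" "\<And>k. absv Z *v u k = of_real (d k) *s u k"
    using spectral[OF psd_hermitian[OF absv(1)]] by blast
  have "d k \<ge> 0" for k using psd_eigen_nonneg[OF absv(1) u(1) u(2)] .
  then show ?thesis using that u by blast
qed

lemma tn_eq: 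
  assumes "orthonormal UNIV u" "\<And>k. absv Z *v u k = of_real (d k) *s u k"
  shows "tn Z = (\<Sum>k\<in>UNIV. d k)"
proof -
  have "trace (absv Z) = (\<Sum>k\<in>UNIV. of_real (d k))"
    using assms by (simp add: trace_onb[OF assms(1)] cinner_scale_right orthonormal_def)
  then show ?thesis by (simp add: tn_def)
qed

lemma trace_bound:
  fixes Z V :: "complex^'d::finite^'d"
  assumes V: "unitary V"
  shows "Re (trace (V ** Z)) \<le> tn Z"
proof -
  obtain u d where u: "orthonormal UNIV u" "\<And>k. absv Z *v u k = of_real (d k) *s u k" "\<And>k. d k \<ge> 0"
    by (rule absv_spectral[of Z]) blast
  have uu: "cinner (u k) (u k) = 1" for k using u(1) by (simp add: orthonormal_def)
  have "Re (trace (V ** Z)) = (\<Sum>k\<in>UNIV. Re (cinner (cadj V *v u k) (Z *v u k)))"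
    by (simp add: trace_onb[OF u(1)] cinner_adj flip: matrix_vector_mul_assoc)
  also have "\<dots> \<le> (\<Sum>k\<in>UNIV. d k)"
  proof (rule sum_mono)
    fix k
    have "Re (cinner (cadj V *v u k) (Z *v u k)) \<le> norm (cadj V *v u k) * norm (Z *v u k)"
      unfolding Re_cinner by (rule norm_cauchy_schwarz)
    also have "\<dots> = d k"
      using unitary_norm[OF unitary_cadj[OF V]] norm_Z_eigen[OF u(2) u(3) uu]
        cinner_one_norm[OF uu] by simp
    finally show "Re (cinner (cadj V *v u k) (Z *v u k)) \<le> d k" .
  qed
  also have "\<dots> = tn Z" using tn_eq[OF u(1) u(2)] by simp
  finally show ?thesis .
qed

lemma polar:
  fixes Z :: "complex^'d::finite^'d"
  shows "\<exists>W. unitary W \<and> W ** absv Z = Z"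
proof -
  obtain u d where u: "orthonormal UNIV u" "\<And>k. absv Z *v u k = of_real (d k) *s u k" "\<And>k. d k \<ge> 0"
    by (rule absv_spectral[of Z]) blast
  have uu: "cinner (u a) (u b) = (if a = b then 1 else 0)" for a b using u(1) by (simp add: orthonormal_def)
  define T0 where "T0 = {k. d k \<noteq> 0}"
  define w where "w k = (1 / d k) *\<^sub>R (Z *v u k)" for k
  have ZZ: "cinner (Z *v u a) (Z *v u b) = of_real (d b ^ 2) * cinner (u a) (u b)" for a b
  proof -
    have "cinner (Z *v u a) (Z *v u b) = cinner (u a) ((cadj Z ** Z) *v u b)"
      by (simp add: cinner_adj flip: matrix_vector_mul_assoc)
    also have "\<dots> = cinner (u a) (absv Z *v (absv Z *v u b))"
      by (simp add: matrix_vector_mul_assoc absv(2))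
    also have "\<dots> = of_real (d b ^ 2) * cinner (u a) (u b)"
      using u by (simp add: mv_scale cinner_scale_right power2_eq_square)
    finally show ?thesis .
  qed
  have onw: "orthonormal T0 w"
    unfolding orthonormal_def
  proof (intro ballI)
    fix a b assume a: "a \<in> T0" and b: "b \<in> T0"
    show "cinner (w a) (w b) = (if a = b then 1 else 0)"
      using a b by (simp add: w_def cinner_scaleR_left cinner_scaleR_right ZZ uu T0_def power2_eq_square)
  qed
  obtain w' where w': "orthonormal UNIV w'" "\<forall>a\<in>T0. w' a = w a"
    using orth_extend[where Q = "\<lambda>_. True", OF _ onw] exists_orth by blast
  define W where "W = cols w' ** cadj (cols u)"
  have "unitary W" unfolding W_def
    using w'(1) u(1) by (intro unitary_mult unitary_cadj) (simp_all add: unitary_cols)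
  moreover have "W ** absv Z = Z"
  proof (rule matrix_eq_on_basis[OF u(1)])
    fix k
    have "(W ** absv Z) *v u k = of_real (d k) *s w' k"
      by (simp add: W_def u(2) mv_scale cadj_cols_vec[OF u(1)] cols_axis flip: matrix_vector_mul_assoc)
    also have "\<dots> = Z *v u k"
    proof (cases "d k = 0")
      case True
      have "norm (Z *v u k) = 0" using norm_Z_eigen[OF u(2) u(3)] uu True by simp
      then show ?thesis using True by simp
    next
      case False
      then have "w' k = w k" using w'(2) by (simp add: T0_def)
      then show ?thesis using False
        by (simp add: w_def scaleR_as_scale vector_smult_assoc flip: of_real_mult)
    qed
    finally show "(W ** absv Z) *v u k = Z *v u k" .
  qed
  ultimately show ?thesis by blast
qed

lemma tn_le_adj: "tn (Z::complex^'d::finite^'d) \<le> tn (cadj Z)"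
proof -
  obtain W where W: "unitary W" "W ** absv Z = Z" using polar by blast
  have hA: "cadj (absv Z) = absv Z" using psd_hermitian[OF absv(1)] by (simp add: hermitian_def)
  have cZ: "cadj Z = absv Z ** cadj W" using W(2) hA by (metis cadj_mult)
  have "trace (W ** cadj Z) = trace (cadj W ** (W ** absv Z))"
    by (simp add: cZ matrix_mul_assoc trace_mul_sym[of _ "cadj W"])
  also have "\<dots> = trace (absv Z)" using W(1) by (simp add: matrix_mul_assoc unitary_def)
  finally have "Re (trace (W ** cadj Z)) = tn Z" by (simp add: tn_def)
  then show ?thesis using trace_bound[OF W(1), of "cadj Z"] by simp
qed

lemma tn_adj: "tn (cadj (Z::complex^'d::finite^'d)) = tn Z"
  using tn_le_adj[of Z] tn_le_adj[of "cadj Z"] by simp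

lemma msqrt_herm: "psd A \<Longrightarrow> cadj (msqrt A) = msqrt A"
  using msqrt(1) psd_hermitian hermitian_def by metis

lemma uhlmann_Y:
  fixes \<rho> Y :: "complex^'d::finite^'d"
  assumes "psd \<rho>"
  shows "uhlmann_fid \<rho> (Y ** cadj Y) = tn (cadj Y ** msqrt \<rho>)"
proof -
  have "cadj (cadj Y ** msqrt \<rho>) ** (cadj Y ** msqrt \<rho>) = msqrt \<rho> ** (Y ** cadj Y) ** msqrt \<rho>"
    using msqrt_herm[OF assms] by (simp add: cadj_mult matrix_mul_assoc)
  then show ?thesis by (simp add: uhlmann_fid_def tn_def absv_def)
qed

lemma inner_trace: "inner (Y::complex^'d::finite^'d) B = Re (trace (B ** cadj Y))"
  by (simp add: trace_def matrix_matrix_mult_def cadj_def inner_vec_def inner_complex_def Re_sum mult.commute)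

lemma trace_YY: "trace ((Y::complex^'d::finite^'d) ** cadj Y) = of_real ((norm Y)\<^sup>2)"
proof -
  have "Im (trace (Y ** cadj Y)) = 0"
    by (simp add: trace_def matrix_matrix_mult_def cadj_def Im_sum mult.commute)
  moreover have "Re (trace (Y ** cadj Y)) = (norm Y)\<^sup>2"
    using inner_trace[of Y Y] by (simp add: power2_norm_eq_inner)
  ultimately show ?thesis by (simp add: complex_eq_iff)
qed

lemma density_YY: "norm (Y::complex^'d::finite^'d) = 1 \<Longrightarrow> density (Y ** cadj Y)"
  by (simp add: density_def psd_muladj trace_YY)

lemma Re_trace_cadj: "Re (trace (cadj M)) = Re (trace M)"
  by (simp add: trace_cadj)

definition outer :: "complex^'d \<Rightarrow> complex^'d \<Rightarrow> complex^'d^'d" where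
  "outer x y = (\<chi> i j. x $ i * cnj (y $ j))"

lemma outer_mv: "outer x y *v z = cinner y z *s (x::complex^'d::finite)"
  by (simp add: outer_def matrix_vector_mult_def cinner_def vec_eq_iff sum_distrib_left mult_ac)

lemma mult_outer: "(M::complex^'d::finite^'d) ** outer x y = outer (M *v x) y"
  by (simp add: outer_def matrix_matrix_mult_def matrix_vector_mult_def vec_eq_iff sum_distrib_left mult_ac)

lemma outer_mult: "outer x y ** (M::complex^'d::finite^'d) = outer x (cadj M *v y)"
  by (simp add: outer_def matrix_matrix_mult_def matrix_vector_mult_def vec_eq_iff sum_distrib_left mult_ac)

lemma trace_outer: "trace (outer x (y::complex^'d::finite)) = cinner y x"
  by (simp add: outer_def trace_def cinner_def mult.commute)

lemma cadj_outer: "cadj (outer x y) = outer y x"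
  by (simp add: outer_def cadj_def vec_eq_iff)

lemma outer_zero_left[simp]: "outer 0 y = 0" and outer_zero_right[simp]: "outer x 0 = 0"
  by (simp_all add: outer_def vec_eq_iff)

lemma inj_of_kernel:
  fixes A :: "complex^'d::finite^'d"
  assumes "\<And>x. A *v x = 0 \<Longrightarrow> x = 0"
  shows "\<exists>B. B ** A = mat 1 \<and> A ** B = mat 1"
proof -
  obtain B where "B ** A = mat 1" using matrix_left_invertible_ker[of A] assms by blast
  then show ?thesis using matrix_left_right_inverse by blast
qed

lemma matrix_inv_works:
  fixes A :: "complex^'d::finite^'d"
  assumes "\<And>x. A *v x = 0 \<Longrightarrow> x = 0"
  shows "A ** matrix_inv A = mat 1" "matrix_inv A ** A = mat 1"
proof -
  have "\<exists>B. A ** B = mat 1 \<and> B ** A = mat 1" using inj_of_kernel[OF assms] by blast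
  then have "A ** matrix_inv A = mat 1 \<and> matrix_inv A ** A = mat 1"
    unfolding matrix_inv_def by (rule someI_ex)
  then show "A ** matrix_inv A = mat 1" "matrix_inv A ** A = mat 1" by auto
qed

lemma unitary_phase:
  fixes x :: "complex^'d::finite"
  assumes xx: "cinner x x = 1" and e: "cmod e = 1"
  shows "unitary (mat 1 + outer ((e - 1) *s x) x)"
proof -
  define Q where "Q = mat 1 + outer ((e - 1) *s x) x"
  have Qv: "Q *v z = z + ((e - 1) * cinner x z) *s x" for z
    by (simp add: Q_def matrix_vector_mult_add_rdistrib outer_mv vec_eq_iff algebra_simps)
  have cQ: "cadj Q = mat 1 + outer x ((e - 1) *s x)"
    by (simp add: Q_def cadj_add cadj_outer)
  have cQv: "cadj Q *v z = z + (cnj (e - 1) * cinner x z) *s x" for z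
    by (simp add: cQ matrix_vector_mult_add_rdistrib outer_mv cinner_scale_left cinner_diff_left vec_eq_iff algebra_simps)
  have ee: "cnj e * e = 1" using e by (metis complex_norm_square mult.commute of_real_1 power_one)
  have "(cadj Q ** Q) *v z = mat 1 *v z" for z
  proof -
    have cx: "cinner x (Q *v z) = e * cinner x z"
      by (simp add: Qv cinner_add_right cinner_diff_right cinner_scale_right xx algebra_simps)
    have "(cadj Q ** Q) *v z = z + ((e - 1) * cinner x z + cnj (e - 1) * (e * cinner x z)) *s x"
      by (simp add: cQv cx flip: matrix_vector_mul_assoc) (simp add: Qv vector_sadd_rdistrib add.assoc)
    also have "(e - 1) * cinner x z + cnj (e - 1) * (e * cinner x z) = (cnj e * e - 1) * cinner x z"
      by (simp add: algebra_simps)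
    finally show ?thesis using ee by simp
  qed
  then have "cadj Q ** Q = mat 1" using matrix_eq by blast
  then show ?thesis by (simp add: unitary_def Q_def)
qed

locale fidset =
  fixes \<rho> :: "nat \<Rightarrow> complex^'d::finite^'d"
    and n :: nat
    and f :: "complex^'d^'d \<Rightarrow> real"
    and \<sigma> :: "complex^'d^'d"
  assumes n: "n \<ge> 2"
    and rho: "\<And>i. i < n \<Longrightarrow> density (\<rho> i) \<and> pd (\<rho> i)"
    and f_def: "\<And>X. f X = (\<Sum>i<n. uhlmann_fid (\<rho> i) X)"
    and sigma_dens: "density \<sigma>"
    and sigma_max: "\<And>X. density X \<Longrightarrow> f X \<le> f \<sigma>"
begin

lemma rho_psd: "i < n \<Longrightarrow> psd (\<rho> i)" using rho density_def by blast
lemma rho_pd: "i < n \<Longrightarrow> pd (\<rho> i)" using rho by blast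
lemma sig_psd: "psd \<sigma>" using sigma_dens density_def by blast

definition P :: "nat \<Rightarrow> complex^'d^'d" where "P i = msqrt (\<rho> i)"
definition s :: "complex^'d^'d" where "s = msqrt \<sigma>"
definition T :: "nat \<Rightarrow> complex^'d^'d" where "T i = P i ** s"
definition A :: "nat \<Rightarrow> complex^'d^'d" where "A i = absv (T i)"
definition W :: "nat \<Rightarrow> complex^'d^'d" where "W i = (SOME W. unitary W \<and> W ** A i = T i)"
definition B :: "nat \<Rightarrow> complex^'d^'d" where "B i = P i ** W i"
definition Bs :: "complex^'d^'d" where "Bs = (\<Sum>i<n. B i)"
definition Phi :: real where "Phi = f \<sigma>"

lemma P_herm: "i < n \<Longrightarrow> cadj (P i) = P i"
  by (simp add: P_def msqrt_herm rho_psd)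
lemma PP: "i < n \<Longrightarrow> P i ** P i = \<rho> i"
  by (simp add: P_def msqrt(2) rho_psd)
lemma s_herm: "cadj s = s"
  by (simp add: s_def msqrt_herm sig_psd)
lemma ss: "s ** s = \<sigma>"
  by (simp add: s_def msqrt(2) sig_psd)
lemma s_psd: "psd s"
  by (simp add: s_def msqrt(1) sig_psd)

lemma W: "unitary (W i)" "W i ** A i = T i"
proof -
  have "\<exists>W. unitary W \<and> W ** A i = T i" using polar[of "T i"] by (simp add: A_def)
  then have "unitary (W i) \<and> W i ** A i = T i" unfolding W_def by (rule someI_ex)
  then show "unitary (W i)" "W i ** A i = T i" by auto
qed

lemma A_herm: "cadj (A i) = A i"
  using absv(1) psd_hermitian hermitian_def A_def by metis

lemma TT: "i < n \<Longrightarrow> cadj (T i) ** T i = s ** \<rho> i ** s"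
proof -
  assume i: "i < n"
  have "cadj (T i) ** T i = s ** (P i ** P i) ** s"
    using i by (simp add: T_def cadj_mult P_herm s_herm matrix_mul_assoc)
  then show ?thesis using i by (simp add: PP)
qed

lemma AA: "i < n \<Longrightarrow> A i ** A i = s ** \<rho> i ** s"
  by (simp add: A_def absv(2) TT)

lemma A_eq: "i < n \<Longrightarrow> A i = msqrt (msqrt \<sigma> ** \<rho> i ** msqrt \<sigma>)"
  by (simp add: A_def absv_def TT flip: s_def)

lemma sigma_YY: "\<sigma> = s ** cadj s" by (simp add: s_herm ss)

lemma fid_sigma: "i < n \<Longrightarrow> uhlmann_fid (\<rho> i) \<sigma> = tn (T i)"
proof -
  assume i: "i < n"
  have "uhlmann_fid (\<rho> i) \<sigma> = tn (cadj s ** P i)"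
    using uhlmann_Y[OF rho_psd[OF i], of s] by (simp add: P_def s_herm ss)
  also have "cadj s ** P i = cadj (T i)" using i by (simp add: T_def cadj_mult P_herm s_herm)
  finally show ?thesis by (simp add: tn_adj)
qed

lemma Phi_tn: "Phi = (\<Sum>i<n. tn (T i))"
  by (simp add: Phi_def f_def fid_sigma)

lemma lower:
  assumes V: "\<And>i. i < n \<Longrightarrow> unitary (V i)"
  shows "(\<Sum>i<n. Re (trace (V i ** (cadj Y ** P i)))) \<le> f (Y ** cadj Y)"
  unfolding f_def
proof (rule sum_mono)
  fix i assume "i \<in> {..<n}"
  then have i: "i < n" by simp
  have "uhlmann_fid (\<rho> i) (Y ** cadj Y) = tn (cadj Y ** P i)"
    using uhlmann_Y[OF rho_psd[OF i], of Y] by (simp add: P_def)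
  then show "Re (trace (V i ** (cadj Y ** P i))) \<le> uhlmann_fid (\<rho> i) (Y ** cadj Y)"
    using trace_bound[OF V[OF i]] by simp
qed

lemma WsP: "i < n \<Longrightarrow> Re (trace (W i ** (cadj s ** P i))) = tn (T i)"
proof -
  assume i: "i < n"
  have "cadj (W i ** (cadj s ** P i)) = W i ** A i ** cadj (W i)"
    using i by (simp add: cadj_mult P_herm s_herm W(2) T_def matrix_mul_assoc)
  then have "Re (trace (W i ** (cadj s ** P i))) = Re (trace (W i ** A i ** cadj (W i)))"
    by (metis Re_trace_cadj)
  also have "\<dots> = Re (trace (A i))"
    using W(1)[of i] by (simp add: trace_mul_sym[of "W i ** A i"] matrix_mul_assoc unitary_def)
  finally show ?thesis by (simp add: tn_def A_def)
qed

lemma inner_B: "Re (trace (W i ** (cadj Y ** P i))) = inner Y (B i)"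
proof -
  have "trace (P i ** W i ** cadj Y) = trace ((W i ** cadj Y) ** P i)"
    by (metis matrix_mul_assoc trace_mul_sym)
  then show ?thesis by (simp add: inner_trace B_def matrix_mul_assoc)
qed

lemma lowerB: "inner Y Bs \<le> f (Y ** cadj Y)"
  using lower[of W Y] W(1) by (simp add: inner_B Bs_def inner_sum_right)

lemma Phi_inner: "Phi = inner s Bs"
  by (simp add: Phi_tn Bs_def inner_sum_right flip: inner_B WsP)

lemma norm_s: "norm s = 1"
proof -
  have "trace (s ** cadj s) = 1" using sigma_dens by (simp add: density_def flip: sigma_YY)
  then have "(norm s)\<^sup>2 = 1" by (simp add: trace_YY) (metis of_real_eq_1_iff of_real_power)
  then show ?thesis using norm_ge_zero[of s] by (simp add: power2_eq_1_iff)
qed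

lemma Bs_eq: "Bs = Phi *\<^sub>R s"
proof (cases "Bs = 0")
  case True
  then show ?thesis using Phi_inner by simp
next
  case False
  define Y where "Y = (1 / norm Bs) *\<^sub>R Bs"
  have nY: "norm Y = 1" using False by (simp add: Y_def)
  have "norm Bs = inner Y Bs" using False by (simp add: Y_def power2_norm_eq_inner[symmetric] power2_eq_square)
  also have "\<dots> \<le> f (Y ** cadj Y)" by (rule lowerB)
  also have "\<dots> \<le> Phi" unfolding Phi_def by (rule sigma_max[OF density_YY[OF nY]])
  finally have le: "norm Bs \<le> Phi" .
  have "Phi \<le> norm s * norm Bs" unfolding Phi_inner by (rule norm_cauchy_schwarz)
  then have eqn: "Phi = norm Bs" using le norm_s by simp
  then have "inner s Bs = norm s * norm Bs" using norm_s Phi_inner by simp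
  then have "norm s *\<^sub>R Bs = norm Bs *\<^sub>R s" by (simp add: norm_cauchy_schwarz_eq)
  then show ?thesis using norm_s eqn by simp
qed

lemma A_B: "i < n \<Longrightarrow> A i = cadj (B i) ** s"
proof -
  assume i: "i < n"
  have "A i = cadj (W i) ** (W i ** A i)"
    using W(1)[of i] by (simp add: matrix_mul_assoc unitary_def)
  also have "\<dots> = cadj (B i) ** s"
    using i by (simp add: W(2) T_def B_def cadj_mult P_herm matrix_mul_assoc)
  finally show ?thesis .
qed

lemma A_sum: "(\<Sum>i<n. A i) = Phi *\<^sub>R \<sigma>"
proof -
  have "(\<Sum>i<n. A i) = (\<Sum>i<n. cadj (B i) ** s)" by (simp add: A_B)
  also have "\<dots> = cadj Bs ** s" by (simp add: Bs_def cadj_sum sum_matrix_mult_right)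
  also have "\<dots> = Phi *\<^sub>R \<sigma>" by (simp add: Bs_eq cadj_scaleR matrix_scaleR_left s_herm ss)
  finally show ?thesis .
qed

lemma A_hermitian: "hermitian (A i)" using A_herm by (simp add: hermitian_def)
lemma s_hermitian: "hermitian s" using s_herm by (simp add: hermitian_def)

lemma kernel_A:
  assumes i: "i < n" and x: "s *v x = 0"
  shows "A i *v x = 0"
proof -
  have "(A i ** A i) *v x = 0"
    using i x by (simp add: AA flip: matrix_vector_mul_assoc)
  then have "cinner (A i *v x) (A i *v x) = 0"
    using hermitian_cinner[OF A_hermitian[of i], of x "A i *v x"] by (simp add: matrix_vector_mul_assoc)
  then show ?thesis by simp
qed

lemma sP: "i < n \<Longrightarrow> s ** P i = A i ** cadj (W i)"
proof -
  assume i: "i < n"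
  have "cadj (T i) = s ** P i" using i by (simp add: T_def cadj_mult P_herm s_herm)
  moreover have "cadj (T i) = A i ** cadj (W i)" using W(2)[of i] A_herm by (metis cadj_mult)
  ultimately show ?thesis by simp
qed

lemma sB: "i < n \<Longrightarrow> s ** B i = A i"
proof -
  assume i: "i < n"
  have "s ** B i = (s ** P i) ** W i" by (simp add: B_def matrix_mul_assoc)
  also have "\<dots> = A i ** (cadj (W i) ** W i)" by (simp add: sP[OF i] matrix_mul_assoc)
  also have "\<dots> = A i" using W(1)[of i] by (simp add: unitary_def)
  finally show ?thesis .
qed

lemma kernel_B:
  assumes i: "i < n" and x: "s *v x = 0"
  shows "s *v (B i *v x) = 0"
  using kernel_A[OF i x] sB[OF i] by (simp add: matrix_vector_mul_assoc)

lemma B_inj: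
  assumes i: "i < n" and x: "B i *v x = 0"
  shows "x = 0"
proof -
  have "\<rho> i *v (W i *v x) = 0"
    using x i by (simp add: B_def matrix_vector_mul_assoc flip: PP) (simp flip: matrix_vector_mul_assoc)
  then have "W i *v x = 0"
    using rho_pd[OF i] unfolding pd_def by (metis cinner_zero_right less_irrefl zero_complex.sel(1))
  then have "cadj (W i) *v (W i *v x) = 0" by simp
  then show ?thesis using W(1)[of i] by (simp add: matrix_vector_mul_assoc unitary_def)
qed

lemma exists_gamma:
  assumes x0: "x0 \<noteq> 0" "s *v x0 = 0"
  shows "\<exists>x. s *v x = 0 \<and> cinner x (B 0 *v x) \<noteq> 0"
proof (rule ccontr)
  assume "\<not> ?thesis"
  then have q: "\<And>x. s *v x = 0 \<Longrightarrow> cinner x (B 0 *v x) = 0" by blast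
  have n0: "0 < n" using n by simp
  define y where "y = B 0 *v x0"
  have sy: "s *v y = 0" using kernel_B[OF n0 x0(2)] by (simp add: y_def)
  define al where "al = cinner y (B 0 *v x0)"
  define be where "be = cinner x0 (B 0 *v y)"
  have "s *v (y + x0) = 0" using sy x0(2) by (simp add: matrix_vector_right_distrib)
  then have "cinner (y + x0) (B 0 *v (y + x0)) = 0" by (rule q)
  then have e1: "al + be = 0"
    using q[OF sy] q[OF x0(2)]
    by (simp add: al_def be_def matrix_vector_right_distrib cinner_add_left cinner_add_right add_ac)
  have "s *v (y + \<i> *s x0) = 0" using sy x0(2) by (simp add: matrix_vector_right_distrib mv_scale)
  then have "cinner (y + \<i> *s x0) (B 0 *v (y + \<i> *s x0)) = 0" by (rule q)
  then have e2: "\<i> * al - \<i> * be = 0"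
    using q[OF sy] q[OF x0(2)]
    by (simp add: al_def be_def matrix_vector_right_distrib cinner_add_left cinner_add_right
        mv_scale cinner_scale_left cinner_scale_right)
  have "al = 0" using e1 e2 by (simp add: algebra_simps)
  then have "cinner y y = 0" by (simp add: al_def y_def)
  then have "y = 0" by simp
  then show False using B_inj[OF n0] x0(1) by (simp add: y_def)
qed

end

lemma trace_zero[simp]: "trace (0::complex^'d::finite^'d) = 0"
  by (simp add: trace_def)

lemma phase_exists: "\<exists>e. cmod e = 1 \<and> e * g = of_real (cmod g)"
proof (cases "g = 0")
  case True then show ?thesis by (intro exI[of _ 1]) simp
next
  case False
  define e where "e = cnj g / of_real (cmod g)"
  have "cmod e = 1" using False by (simp add: e_def norm_divide)
  moreover have "e * g = of_real (cmod g)"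
    using False by (simp add: e_def complex_norm_square[symmetric] power2_eq_square field_simps
        flip: of_real_mult)
  ultimately show ?thesis by blast
qed

context fidset
begin

lemma sigma_pd: "pd \<sigma>"
  unfolding pd_def
proof (intro conjI allI impI)
  show "hermitian \<sigma>" using sig_psd by (simp add: psd_def)
  fix x0 :: "complex^'d"
  assume x0: "x0 \<noteq> 0"
  show "0 < Re (cinner x0 (\<sigma> *v x0))"
  proof (rule ccontr)
    assume "\<not> ?thesis"
    then have "Re (cinner x0 (\<sigma> *v x0)) = 0" using psd_quad_nonneg[OF sig_psd, of x0] by simp
    moreover have "cinner x0 (\<sigma> *v x0) = cinner (s *v x0) (s *v x0)"
      using hermitian_cinner[OF s_hermitian, of x0 "s *v x0"] by (simp add: matrix_vector_mul_assoc ss)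
    ultimately have sx0: "s *v x0 = 0" by (simp add: Re_cinner_self)
    obtain x1 where x1: "s *v x1 = 0" "cinner x1 (B 0 *v x1) \<noteq> 0"
      using exists_gamma[OF x0 sx0] by blast
    then have "x1 \<noteq> 0" by auto
    define x where "x = (1 / norm x1) *\<^sub>R x1"
    have xx: "cinner x x = 1"
      using \<open>x1 \<noteq> 0\<close> by (simp add: x_def cinner_scaleR_left cinner_scaleR_right cinner_self power2_eq_square)
    have sx: "s *v x = 0" using x1(1) by (simp add: x_def mv_scaleR)
    have g0: "cinner x (B 0 *v x) \<noteq> 0"
      using x1(2) \<open>x1 \<noteq> 0\<close> by (simp add: x_def mv_scaleR cinner_scaleR_left cinner_scaleR_right)
    define gam where "gam i = cinner x (B i *v x)" for i
    have "\<forall>i. \<exists>c. cmod c = 1 \<and> c * gam i = of_real (cmod (gam i))" using phase_exists by blast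
    then obtain e where e: "\<And>i. cmod (e i) = 1 \<and> e i * gam i = of_real (cmod (gam i))"
      using choice[of "\<lambda>i c. cmod c = 1 \<and> c * gam i = of_real (cmod (gam i))"] by blast
    define Q where "Q i = mat 1 + outer ((e i - 1) *s x) x" for i
    define V where "V i = W i ** Q i" for i
    have V: "unitary (V i)" for i
      unfolding V_def Q_def using W(1) unitary_phase[OF xx] e by (intro unitary_mult) auto
    have Qs: "Q i ** s = s" for i
      by (simp add: Q_def matrix_add_rdistrib2 outer_mult s_herm sx)
    have Qx: "Q i *v x = e i *s x" for i
      by (simp add: Q_def matrix_vector_mult_add_rdistrib outer_mv xx vec_eq_iff algebra_simps)
    have QX: "Q i ** outer x x = outer (e i *s x) x" for i
      by (simp add: mult_outer Qx)
    define g where "g = (\<Sum>i<n. cmod (gam i))"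
    have n0: "0 < n" using n by simp
    have "cmod (gam 0) \<le> g" unfolding g_def by (rule member_le_sum) (use n0 in auto)
    moreover have "cmod (gam 0) > 0" using g0 by (simp add: gam_def)
    ultimately have gpos: "g > 0" by linarith
    define r where "r = sqrt (Phi\<^sup>2 + g\<^sup>2)"
    have rpos: "r > 0" using gpos by (simp add: r_def add_nonneg_pos)
    have r2: "r\<^sup>2 = Phi\<^sup>2 + g\<^sup>2" by (simp add: r_def add_nonneg_nonneg)
    have rPhi: "Phi < r" unfolding r_def using gpos by (intro real_less_rsqrt) simp
    define a where "a = Phi / r"
    define b where "b = g / r"
    define X1 where "X1 = outer x x"
    define Y where "Y = a *\<^sub>R s + b *\<^sub>R X1"
    have cY: "cadj Y = Y" by (simp add: Y_def X1_def cadj_add cadj_scaleR s_herm cadj_outer)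
    have isX: "inner s X1 = 0" by (simp add: inner_trace X1_def outer_mult s_herm sx)
    have iXX: "inner X1 X1 = 1"
      by (simp add: inner_trace X1_def outer_mult cadj_outer outer_mv xx trace_outer)
    have iss: "inner s s = 1" using norm_s by (simp add: power2_norm_eq_inner[symmetric])
    have "inner Y Y = a\<^sup>2 + b\<^sup>2"
      by (simp add: Y_def inner_add_left inner_add_right isX iXX iss inner_commute[of X1 s]
          power2_eq_square)
    also have "\<dots> = 1"
    proof -
      have "a\<^sup>2 + b\<^sup>2 = (Phi\<^sup>2 + g\<^sup>2) / r\<^sup>2" by (simp add: a_def b_def power_divide add_divide_distrib)
      then show ?thesis using r2 rpos gpos by simp
    qed
    finally have nY: "norm Y = 1" by (simp add: norm_eq_sqrt_inner)
    have trm: "Re (trace (V i ** (cadj Y ** P i))) = a * tn (T i) + b * cmod (gam i)" if i: "i < n" for i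
    proof -
      have QY: "Q i ** cadj Y = a *\<^sub>R s + b *\<^sub>R outer (e i *s x) x"
        unfolding cY by (simp add: Y_def matrix_add_ldistrib matrix_scaleR_right Qs QX X1_def)
      have "V i ** (cadj Y ** P i) = W i ** ((Q i ** cadj Y) ** P i)"
        by (simp add: V_def matrix_mul_assoc)
      also have "\<dots> = a *\<^sub>R (W i ** (cadj s ** P i)) + b *\<^sub>R ((W i ** outer (e i *s x) x) ** P i)"
        unfolding QY
        by (simp add: matrix_add_rdistrib2 matrix_add_ldistrib matrix_scaleR_left matrix_scaleR_right
            s_herm matrix_mul_assoc)
      finally have "V i ** (cadj Y ** P i) = a *\<^sub>R (W i ** (cadj s ** P i)) + b *\<^sub>R ((W i ** outer (e i *s x) x) ** P i)" .
      moreover have "trace ((W i ** outer (e i *s x) x) ** P i) = e i * gam i"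
      proof -
        have "trace ((W i ** outer (e i *s x) x) ** P i) = trace (P i ** (W i ** outer (e i *s x) x))"
          by (rule trace_mul_sym)
        also have "\<dots> = cinner x (B i *v (e i *s x))"
          by (simp add: mult_outer trace_outer B_def matrix_vector_mul_assoc)
        also have "\<dots> = e i * gam i" by (simp add: mv_scale cinner_scale_right gam_def)
        finally show ?thesis .
      qed
      ultimately show ?thesis
        using WsP[OF i] e[of i] by (simp add: trace_add trace_scaleR)
    qed
    have "r = a * Phi + b * g"
      using rpos r2 by (simp add: a_def b_def field_simps power2_eq_square)
    also have "\<dots> = (\<Sum>i<n. Re (trace (V i ** (cadj Y ** P i))))"
      by (simp add: trm Phi_tn g_def sum.distrib sum_distrib_left)
    also have "\<dots> \<le> f (Y ** cadj Y)" using lower[of V Y] V by blast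
    also have "\<dots> \<le> Phi" unfolding Phi_def by (rule sigma_max[OF density_YY[OF nY]])
    finally show False using rPhi by simp
  qed
qed

end

context fidset
begin

lemma sig_ker: "\<sigma> *v x = 0 \<Longrightarrow> x = 0"
  using sigma_pd unfolding pd_def by (metis cinner_zero_right less_irrefl zero_complex.sel(1))

definition Si :: "complex^'d^'d" where "Si = matrix_inv \<sigma>"

lemma sig_inv: "\<sigma> ** Si = mat 1" "Si ** \<sigma> = mat 1"
  using matrix_inv_works[OF sig_ker] by (simp_all add: Si_def)

lemma s_ker: "s *v x = 0 \<Longrightarrow> x = 0"
  using sig_ker[of x] by (metis ss matrix_vector_mul_assoc matrix_vector_mult_0_right)

lemma sSs: "s ** Si ** s = mat 1"
proof -
  have "s ** (s ** Si ** s) = s" using sig_inv(1) by (simp add: matrix_mul_assoc ss)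
  then have "s ** (s ** Si ** s - mat 1) = 0" by (simp add: matrix_diff_ldistrib2)
  then have "(s ** Si ** s - mat 1) *v z = 0" for z
    using s_ker by (metis matrix_vector_mul_assoc matrix_vector_mult_0)
  then have "s ** Si ** s - mat 1 = 0" by (simp add: matrix_eq)
  then show ?thesis by simp
qed

lemma gen_eq: "i < n \<Longrightarrow> j < n \<Longrightarrow> gen_fid \<sigma> (\<rho> i) (\<rho> j) = trace (A i ** Si ** A j)"
  by (simp add: gen_fid_def A_eq Si_def)

lemma diag: "i < n \<Longrightarrow> gen_fid \<sigma> (\<rho> i) (\<rho> i) = 1"
proof -
  assume i: "i < n"
  have "trace (A i ** Si ** A i) = trace (A i ** (A i ** Si))"
    by (metis matrix_mul_assoc trace_mul_sym)
  also have "\<dots> = trace (s ** (\<rho> i ** s ** Si))" by (simp add: matrix_mul_assoc AA[OF i])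
  also have "\<dots> = trace (\<rho> i ** s ** Si ** s)" by (simp add: trace_mul_sym[of s])
  also have "\<dots> = trace (\<rho> i)" using sSs by (simp flip: matrix_mul_assoc)
  also have "\<dots> = 1" using rho[OF i] by (simp add: density_def)
  finally show ?thesis using gen_eq[OF i i] by simp
qed

lemma double_sum: "(\<Sum>i<n. \<Sum>j<n. gen_fid \<sigma> (\<rho> i) (\<rho> j)) = of_real (Phi\<^sup>2)"
proof -
  have "(\<Sum>i<n. \<Sum>j<n. gen_fid \<sigma> (\<rho> i) (\<rho> j)) = (\<Sum>i<n. \<Sum>j<n. trace (A i ** Si ** A j))"
    by (simp add: gen_eq)
  also have "\<dots> = (\<Sum>i<n. trace (A i ** Si ** (\<Sum>j<n. A j)))"
    by (simp add: trace_sum sum_matrix_mult_left)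
  also have "\<dots> = trace ((\<Sum>i<n. A i) ** Si ** (\<Sum>j<n. A j))"
    by (simp add: trace_sum sum_matrix_mult_right)
  also have "\<dots> = trace ((Phi * Phi) *\<^sub>R (\<sigma> ** Si ** \<sigma>))"
    by (simp add: A_sum matrix_scaleR_left matrix_scaleR_right)
  also have "\<dots> = of_real (Phi\<^sup>2)"
    using sig_inv(1) sigma_dens by (simp add: trace_scaleR density_def power2_eq_square)
  finally show ?thesis .
qed

lemma multi: "multi_fid \<sigma> n \<rho> = of_real ((Phi\<^sup>2 - real n) / (real n ^ 2 - real n))"
proof -
  have "(\<Sum>i<n. \<Sum>j\<in>{..<n} - {i}. gen_fid \<sigma> (\<rho> i) (\<rho> j)) =
        (\<Sum>i<n. (\<Sum>j<n. gen_fid \<sigma> (\<rho> i) (\<rho> j)) - 1)"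
    by (intro sum.cong refl) (simp add: sum_diff1 diag)
  also have "\<dots> = of_real (Phi\<^sup>2) - of_nat n" by (simp add: sum_subtractf double_sum)
  finally have num: "(\<Sum>i<n. \<Sum>j\<in>{..<n} - {i}. gen_fid \<sigma> (\<rho> i) (\<rho> j)) = of_real (Phi\<^sup>2 - real n)"
    by simp
  have den: "(of_nat n * (of_nat n - 1) :: complex) = of_real (real n ^ 2 - real n)"
    by (simp add: power2_eq_square algebra_simps)
  show ?thesis unfolding multi_fid_def num den by (simp only: of_real_divide)
qed

end

theorem mainTheorem16:
  fixes \<rho> :: "nat \<Rightarrow> complex^'d::finite^'d"
    and n :: nat
    and f :: "complex^'d^'d \<Rightarrow> real"
    and \<sigma> :: "complex^'d^'d"
  assumes n: "n \<ge> 2"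
    and rho: "\<And>i. i < n \<Longrightarrow> density (\<rho> i) \<and> pd (\<rho> i)"
    and f_def: "\<And>X. f X = (\<Sum>i<n. uhlmann_fid (\<rho> i) X)"
    and sigma_dens: "density \<sigma>"
    and sigma_max: "\<And>X. density X \<Longrightarrow> f X \<le> f \<sigma>"
  shows "complex_of_real ((f \<sigma>)\<^sup>2) = (\<Sum>i<n. \<Sum>j<n. gen_fid \<sigma> (\<rho> i) (\<rho> j))
       \<and> multi_fid \<sigma> n \<rho> = complex_of_real (((f \<sigma>)\<^sup>2 - real n) / (real n ^ 2 - real n))"
proof -
  interpret fidset \<rho> n f \<sigma> using assms by unfold_locales auto
  show ?thesis using double_sum multi by (simp add: Phi_def)
qed

end
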